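(* Consider a team-against-team zero-sum game with standard Borel state space $\Omega_0$, Team 1 (minimizer, $N_1$ players) and Team 2 (maximizer, $N_2$ players), standard Borel measurement spaces $\mathbb{Y}^j_i$, compact standard Borel action spaces $\mathbb{U}^j_i$, and a cost $c:\Omega_0\times\prod_j\mathbb{U}^j_1\times\prod_j\mathbb{U}^j_2\to\mathbb{R}$ that is measurable, bounded and continuous in the players' actions for every $\omega_0$. Each team uses team policies with common randomness within the team (randomness independent across teams). Consider information structures (probability measures on $\Omega_0\times\prod_j\mathbb{Y}^j_1\times\prod_j\mathbb{Y}^j_2$) such that for each team $i$ the marginal on $\Omega_0\times\prod_{j}\mathbb{Y}^j_i$ is absolutely continuous with respect to a product $\mu_{0}\otimes\bigotimes_j\bar Q^j_i$ of probability measures, so that a saddle-point equilibrium exists with value $J^*(c,\cdot)$. Then $J^*(c,\cdot)$ is continuous under total variation on this class: if $\mu_n,\mu$ belong to this class and $\|\mu_n-\mu\|_{TV}\to0$, then $J^*(c,\mu_n)\to J^*(c,\mu)$.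
   Context: Team policies with common randomness: $u^j_i=\gamma^j_i(y^j_i,z_i)$ where $z_i\in[0,1]^{N_i}$ is independent of the state and measurements and of the other team's randomness. The equilibrium value $J^*(c,\mu)$ is the common value of $\inf_{\bar\gamma_1}\sup_{\bar\gamma_2}$ and $\sup_{\bar\gamma_2}\inf_{\bar\gamma_1}$ of $E^{\mu,\bar\gamma_1,\bar\gamma_2}[c(\omega_0,u_1,u_2)]$. $\|P-Q\|_{TV}=\sup_{\|f\|_\infty\le1}|\int f\,dP-\int f\,dQ|$. *)

theory Defs
  imports "HOL-Probability.Probability"
begin

text \<open>Borel subset of a Polish type, viewed as a standard Borel measurable space.\<close>
definition sb :: "'a::topological_space set \<Rightarrow> 'a measure" where
  "sb A = restrict_space borel A"

definition rand_space :: "nat \<Rightarrow> (nat \<Rightarrow> real) measure" where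
  "rand_space N = PiM {..<N} (\<lambda>_. restrict_space borel {0..1::real})"

text \<open>Team policies with common randomness: a distribution eta of the common
  randomness z and, for each player j < N, a measurable policy gamma j : Y_j x [0,1]^N \<rightarrow> U_j.\<close>
definition team_policies ::
  "nat \<Rightarrow> (nat \<Rightarrow> 'y::topological_space set) \<Rightarrow> (nat \<Rightarrow> 'u::topological_space set)
   \<Rightarrow> ((nat \<Rightarrow> real) measure \<times> (nat \<Rightarrow> 'y \<times> (nat \<Rightarrow> real) \<Rightarrow> 'u)) set" where
  "team_policies N Y U = {(\<eta>, \<gamma>). prob_space \<eta> \<and> sets \<eta> = sets (rand_space N) \<and>
      (\<forall>j<N. \<gamma> j \<in> measurable (sb (Y j) \<Otimes>\<^sub>M rand_space N) (sb (U j)))}"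

definition act :: "nat \<Rightarrow> (nat \<Rightarrow> 'y \<times> (nat \<Rightarrow> real) \<Rightarrow> 'u) \<Rightarrow> (nat \<Rightarrow> 'y) \<Rightarrow> (nat \<Rightarrow> real) \<Rightarrow> (nat \<Rightarrow> 'u)" where
  "act N \<gamma> y z = (\<lambda>j\<in>{..<N}. \<gamma> j (y j, z))"

text \<open>Expected cost E^{mu, gamma1, gamma2}[c(omega0,u1,u2)]; the common randomness of the two teams
  is independent of each other and of (omega0, y1, y2).\<close>
definition exp_cost ::
  "nat \<Rightarrow> nat \<Rightarrow> ('o \<Rightarrow> (nat \<Rightarrow> 'u1) \<Rightarrow> (nat \<Rightarrow> 'u2) \<Rightarrow> real)
   \<Rightarrow> ('o \<times> (nat \<Rightarrow> 'y1) \<times> (nat \<Rightarrow> 'y2)) measure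
   \<Rightarrow> (nat \<Rightarrow> real) measure \<times> (nat \<Rightarrow> 'y1 \<times> (nat \<Rightarrow> real) \<Rightarrow> 'u1)
   \<Rightarrow> (nat \<Rightarrow> real) measure \<times> (nat \<Rightarrow> 'y2 \<times> (nat \<Rightarrow> real) \<Rightarrow> 'u2) \<Rightarrow> real" where
  "exp_cost N1 N2 c \<mu> p1 p2 =
     (\<integral>x. (case x of (((\<omega>, y1, y2), z1), z2) \<Rightarrow>
              c \<omega> (act N1 (snd p1) y1 z1) (act N2 (snd p2) y2 z2))
        \<partial>((\<mu> \<Otimes>\<^sub>M fst p1) \<Otimes>\<^sub>M fst p2))"

definition upper_value where
  "upper_value N1 N2 Y1 Y2 U1 U2 c \<mu> =
     (INF p1\<in>team_policies N1 Y1 U1. SUP p2\<in>team_policies N2 Y2 U2. exp_cost N1 N2 c \<mu> p1 p2)"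

definition lower_value where
  "lower_value N1 N2 Y1 Y2 U1 U2 c \<mu> =
     (SUP p2\<in>team_policies N2 Y2 U2. INF p1\<in>team_policies N1 Y1 U1. exp_cost N1 N2 c \<mu> p1 p2)"

definition tv_dist :: "'a measure \<Rightarrow> 'a measure \<Rightarrow> 'a measure \<Rightarrow> real" where
  "tv_dist M P Q = (SUP f\<in>{f \<in> borel_measurable M. \<forall>x\<in>space M. \<bar>f x\<bar> \<le> 1}.
      \<bar>(\<integral>x. f x \<partial>P) - (\<integral>x. f x \<partial>Q)\<bar>)"

definition info_class ::
  "nat \<Rightarrow> nat \<Rightarrow> 'o::topological_space set \<Rightarrow> (nat \<Rightarrow> 'y1::topological_space set)
   \<Rightarrow> (nat \<Rightarrow> 'y2::topological_space set) \<Rightarrow> ('o \<times> (nat \<Rightarrow> 'y1) \<times> (nat \<Rightarrow> 'y2)) measure \<Rightarrow> bool" where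
  "info_class N1 N2 \<Omega>0 Y1 Y2 \<mu> \<longleftrightarrow>
     prob_space \<mu> \<and>
     sets \<mu> = sets (sb \<Omega>0 \<Otimes>\<^sub>M (PiM {..<N1} (\<lambda>j. sb (Y1 j)) \<Otimes>\<^sub>M PiM {..<N2} (\<lambda>j. sb (Y2 j)))) \<and>
     (\<exists>\<mu>0 Q. prob_space \<mu>0 \<and> sets \<mu>0 = sets (sb \<Omega>0) \<and>
        (\<forall>j<N1. prob_space (Q j) \<and> sets (Q j) = sets (sb (Y1 j))) \<and>
        absolutely_continuous (\<mu>0 \<Otimes>\<^sub>M PiM {..<N1} Q)
          (distr \<mu> (sb \<Omega>0 \<Otimes>\<^sub>M PiM {..<N1} (\<lambda>j. sb (Y1 j))) (\<lambda>(\<omega>, y1, y2). (\<omega>, y1)))) \<and>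
     (\<exists>\<mu>0 Q. prob_space \<mu>0 \<and> sets \<mu>0 = sets (sb \<Omega>0) \<and>
        (\<forall>j<N2. prob_space (Q j) \<and> sets (Q j) = sets (sb (Y2 j))) \<and>
        absolutely_continuous (\<mu>0 \<Otimes>\<^sub>M PiM {..<N2} Q)
          (distr \<mu> (sb \<Omega>0 \<Otimes>\<^sub>M PiM {..<N2} (\<lambda>j. sb (Y2 j))) (\<lambda>(\<omega>, y1, y2). (\<omega>, y2))))"

end

theory Submission imports Defs begin

lemma abs_int_le:
  fixes g :: "'a \<Rightarrow> real"
  assumes P: "prob_space P" and gm: "g \<in> borel_measurable P" and gb: "\<forall>x\<in>space P. \<bar>g x\<bar> \<le> B"
  shows "\<bar>\<integral>x. g x \<partial>P\<bar> \<le> B"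
proof -
  interpret prob_space P by fact
  have ig: "integrable P g" using gb gm by (intro integrable_const_bound[where B=B]) auto
  have "(\<integral>x. g x \<partial>P) \<le> B" using gb by (intro integral_le_const ig AE_I2) auto
  moreover have "(\<integral>x. - g x \<partial>P) \<le> B" using gb by (intro integral_le_const AE_I2) (auto simp: ig)
  ultimately show ?thesis by auto
qed

lemma fubA:
  fixes F :: "'a \<times> 'b \<Rightarrow> real"
  assumes N: "prob_space N"
    and Fm: "F \<in> borel_measurable (M \<Otimes>\<^sub>M N)" and Fb: "\<forall>w\<in>space (M \<Otimes>\<^sub>M N). \<bar>F w\<bar> \<le> B"
  shows "(\<lambda>x. \<integral>y. F (x,y) \<partial>N) \<in> borel_measurable M"
    "\<forall>x\<in>space M. \<bar>\<integral>y. F (x,y) \<partial>N\<bar> \<le> B"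
    "\<And>P. prob_space P \<Longrightarrow> sets P = sets M \<Longrightarrow>
       (\<integral>w. F w \<partial>(P \<Otimes>\<^sub>M N)) = (\<integral>x. (\<integral>y. F (x,y) \<partial>N) \<partial>P)"
proof -
  interpret N: prob_space N by fact
  show "(\<lambda>x. \<integral>y. F (x,y) \<partial>N) \<in> borel_measurable M"
    by (rule N.borel_measurable_lebesgue_integral[where f="\<lambda>x y. F (x,y)"]) (use Fm in simp)
  show "\<forall>x\<in>space M. \<bar>\<integral>y. F (x,y) \<partial>N\<bar> \<le> B"
  proof
    fix x assume x: "x \<in> space M"
    show "\<bar>\<integral>y. F (x,y) \<partial>N\<bar> \<le> B"
      by (rule abs_int_le[OF N]) (use Fm Fb x in \<open>auto simp: space_pair_measure\<close>)
  qed
  fix P assume P: "prob_space P" and sP: "sets P = sets M"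
  interpret P: prob_space P by fact
  interpret PN: pair_sigma_finite P N by unfold_locales
  interpret PNp: prob_space "P \<Otimes>\<^sub>M N" by (rule prob_space_pair[OF P N])
  have sPN: "sets (P \<Otimes>\<^sub>M N) = sets (M \<Otimes>\<^sub>M N)" by (rule sets_pair_measure_cong[OF sP refl])
  have Fm': "F \<in> borel_measurable (P \<Otimes>\<^sub>M N)" using Fm by (simp add: measurable_cong_sets[OF sPN refl])
  have "integrable (P \<Otimes>\<^sub>M N) F"
    using Fb sets_eq_imp_space_eq[OF sPN] by (intro PNp.integrable_const_bound[where B=B] Fm') auto
  then show "(\<integral>w. F w \<partial>(P \<Otimes>\<^sub>M N)) = (\<integral>x. (\<integral>y. F (x,y) \<partial>N) \<partial>P)"
    by (rule PN.integral_fst'[symmetric])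
qed

lemma tv_facts:
  fixes M :: "'a measure"
  assumes P: "prob_space P" and Q: "prob_space Q" and sP: "sets P = sets M" and sQ: "sets Q = sets M"
  shows "0 \<le> tv_dist M P Q"
    "\<And>(h::'a\<Rightarrow>real) K. h \<in> borel_measurable M \<Longrightarrow> \<forall>x\<in>space M. \<bar>h x\<bar> \<le> K \<Longrightarrow> K > 0 \<Longrightarrow>
       \<bar>(\<integral>x. h x \<partial>P) - (\<integral>x. h x \<partial>Q)\<bar> \<le> K * tv_dist M P Q"
proof -
  define S where "S = {f \<in> borel_measurable M. \<forall>x\<in>space M. \<bar>f x\<bar> \<le> (1::real)}"
  have spP: "space P = space M" by (rule sets_eq_imp_space_eq[OF sP])
  have spQ: "space Q = space M" by (rule sets_eq_imp_space_eq[OF sQ])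
  have b1: "\<bar>(\<integral>x. f x \<partial>P) - (\<integral>x. f x \<partial>Q)\<bar> \<le> 2" if "f \<in> S" for f
  proof -
    have "\<bar>\<integral>x. f x \<partial>P\<bar> \<le> 1"
      by (rule abs_int_le[OF P]) (use that spP in \<open>auto simp: S_def measurable_cong_sets[OF sP refl]\<close>)
    moreover have "\<bar>\<integral>x. f x \<partial>Q\<bar> \<le> 1"
      by (rule abs_int_le[OF Q]) (use that spQ in \<open>auto simp: S_def measurable_cong_sets[OF sQ refl]\<close>)
    ultimately show ?thesis by linarith
  qed
  have bdd: "bdd_above ((\<lambda>f. \<bar>(\<integral>x. f x \<partial>P) - (\<integral>x. f x \<partial>Q)\<bar>) ` S)"
    using b1 by (intro bdd_aboveI2[where M=2]) auto
  have tv: "tv_dist M P Q = (SUP f\<in>S. \<bar>(\<integral>x. f x \<partial>P) - (\<integral>x. f x \<partial>Q)\<bar>)"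
    unfolding tv_dist_def S_def by simp
  have up: "\<bar>(\<integral>x. f x \<partial>P) - (\<integral>x. f x \<partial>Q)\<bar> \<le> tv_dist M P Q" if "f \<in> S" for f
    unfolding tv by (rule cSUP_upper[OF that bdd])
  have "(\<lambda>x. 0) \<in> S" unfolding S_def by auto
  from up[OF this] show "0 \<le> tv_dist M P Q" by simp
  fix h :: "'a \<Rightarrow> real" and K :: real assume hm: "h \<in> borel_measurable M" and hb: "\<forall>x\<in>space M. \<bar>h x\<bar> \<le> K" and K: "K > 0"
  have "(\<lambda>x. h x / K) \<in> S" unfolding S_def using hm hb K by (auto simp: divide_le_eq_1)
  from up[OF this] have "\<bar>(\<integral>x. h x \<partial>P) / K - (\<integral>x. h x \<partial>Q) / K\<bar> \<le> tv_dist M P Q"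
    by simp
  then have "\<bar>(\<integral>x. h x \<partial>P) - (\<integral>x. h x \<partial>Q)\<bar> / K \<le> tv_dist M P Q"
    using K by (simp add: diff_divide_distrib[symmetric])
  then show "\<bar>(\<integral>x. h x \<partial>P) - (\<integral>x. h x \<partial>Q)\<bar> \<le> K * tv_dist M P Q"
    using K by (simp add: divide_le_eq mult.commute)
qed

lemma sup_close:
  fixes f g :: "'b \<Rightarrow> real"
  assumes "\<forall>b\<in>B. \<bar>f b - g b\<bar> \<le> d" "\<forall>b\<in>B. \<bar>f b\<bar> \<le> K" "\<forall>b\<in>B. \<bar>g b\<bar> \<le> K" "0 \<le> d"
  shows "\<bar>(SUP b\<in>B. f b) - (SUP b\<in>B. g b)\<bar> \<le> d"
proof (cases "B = {}")
  case True then show ?thesis using assms by simp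
next
  case False
  have bf: "bdd_above (f ` B)" using assms(2) by (intro bdd_aboveI2[where M=K]) auto
  have bg: "bdd_above (g ` B)" using assms(3) by (intro bdd_aboveI2[where M=K]) auto
  have "(SUP b\<in>B. f b) \<le> (SUP b\<in>B. g b) + d"
  proof (rule cSUP_least[OF False])
    fix b assume b: "b \<in> B"
    have "g b \<le> (SUP b\<in>B. g b)" by (rule cSUP_upper[OF b bg])
    then show "f b \<le> (SUP b\<in>B. g b) + d" using assms(1) b by force
  qed
  moreover have "(SUP b\<in>B. g b) \<le> (SUP b\<in>B. f b) + d"
  proof (rule cSUP_least[OF False])
    fix b assume b: "b \<in> B"
    have "f b \<le> (SUP b\<in>B. f b)" by (rule cSUP_upper[OF b bf])
    then show "g b \<le> (SUP b\<in>B. f b) + d" using assms(1) b by force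
  qed
  ultimately show ?thesis by linarith
qed

lemma inf_close:
  fixes f g :: "'b \<Rightarrow> real"
  assumes "\<forall>b\<in>B. \<bar>f b - g b\<bar> \<le> d" "\<forall>b\<in>B. \<bar>f b\<bar> \<le> K" "\<forall>b\<in>B. \<bar>g b\<bar> \<le> K" "0 \<le> d"
  shows "\<bar>(INF b\<in>B. f b) - (INF b\<in>B. g b)\<bar> \<le> d"
proof (cases "B = {}")
  case True then show ?thesis using assms by simp
next
  case False
  have bf: "bdd_below (f ` B)" using assms(2) by (intro bdd_belowI2[where m="-K"]) force
  have bg: "bdd_below (g ` B)" using assms(3) by (intro bdd_belowI2[where m="-K"]) force
  have "(INF b\<in>B. g b) - d \<le> (INF b\<in>B. f b)"
  proof (rule cINF_greatest[OF False])
    fix b assume b: "b \<in> B"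
    have "(INF b\<in>B. g b) \<le> g b" by (rule cINF_lower[OF bg b])
    then show "(INF b\<in>B. g b) - d \<le> f b" using assms(1) b by force
  qed
  moreover have "(INF b\<in>B. f b) - d \<le> (INF b\<in>B. g b)"
  proof (rule cINF_greatest[OF False])
    fix b assume b: "b \<in> B"
    have "(INF b\<in>B. f b) \<le> f b" by (rule cINF_lower[OF bf b])
    then show "(INF b\<in>B. f b) - d \<le> g b" using assms(1) b by force
  qed
  ultimately show ?thesis by linarith
qed

lemma sup_bound:
  fixes f :: "'b \<Rightarrow> real"
  assumes "B \<noteq> {}" "\<forall>b\<in>B. \<bar>f b\<bar> \<le> K"
  shows "\<bar>SUP b\<in>B. f b\<bar> \<le> K"
proof -
  have bf: "bdd_above (f ` B)" using assms(2) by (intro bdd_aboveI2[where M=K]) auto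
  obtain b0 where b0: "b0 \<in> B" using assms(1) by auto
  have "(SUP b\<in>B. f b) \<le> K" using assms by (intro cSUP_least) auto
  moreover have "f b0 \<le> (SUP b\<in>B. f b)" by (rule cSUP_upper[OF b0 bf])
  ultimately show ?thesis using assms(2) b0 by force
qed

lemma inf_bound:
  fixes f :: "'b \<Rightarrow> real"
  assumes "B \<noteq> {}" "\<forall>b\<in>B. \<bar>f b\<bar> \<le> K"
  shows "\<bar>INF b\<in>B. f b\<bar> \<le> K"
proof -
  have bf: "bdd_below (f ` B)" using assms(2) by (intro bdd_belowI2[where m="-K"]) force
  obtain b0 where b0: "b0 \<in> B" using assms(1) by auto
  have "-K \<le> (INF b\<in>B. f b)" using assms by (intro cINF_greatest) force+
  moreover have "(INF b\<in>B. f b) \<le> f b0" by (rule cINF_lower[OF bf b0])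
  ultimately show ?thesis using assms(2) b0 by force
qed

lemma minimax_close:
  fixes f g :: "'a \<Rightarrow> 'b \<Rightarrow> real"
  assumes cl: "\<forall>a\<in>A. \<forall>b\<in>B. \<bar>f a b - g a b\<bar> \<le> d"
    and bf: "\<forall>a\<in>A. \<forall>b\<in>B. \<bar>f a b\<bar> \<le> K" and bg: "\<forall>a\<in>A. \<forall>b\<in>B. \<bar>g a b\<bar> \<le> K"
    and d: "0 \<le> d"
  shows "\<bar>(INF a\<in>A. SUP b\<in>B. f a b) - (INF a\<in>A. SUP b\<in>B. g a b)\<bar> \<le> d"
    and "\<bar>(SUP b\<in>B. INF a\<in>A. f a b) - (SUP b\<in>B. INF a\<in>A. g a b)\<bar> \<le> d"
proof -
  show "\<bar>(INF a\<in>A. SUP b\<in>B. f a b) - (INF a\<in>A. SUP b\<in>B. g a b)\<bar> \<le> d"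
  proof (cases "B = {}")
    case True then show ?thesis using d by simp
  next
    case False
    show ?thesis
    proof (rule inf_close[where K=K])
      show "\<forall>a\<in>A. \<bar>(SUP b\<in>B. f a b) - (SUP b\<in>B. g a b)\<bar> \<le> d"
      proof
        fix a assume a: "a \<in> A"
        show "\<bar>(SUP b\<in>B. f a b) - (SUP b\<in>B. g a b)\<bar> \<le> d"
          by (rule sup_close[where K=K]) (use cl bf bg d a in auto)
      qed
      show "\<forall>a\<in>A. \<bar>SUP b\<in>B. f a b\<bar> \<le> K"
      proof
        fix a assume a: "a \<in> A"
        show "\<bar>SUP b\<in>B. f a b\<bar> \<le> K" by (rule sup_bound[OF False]) (use bf a in auto)
      qed
      show "\<forall>a\<in>A. \<bar>SUP b\<in>B. g a b\<bar> \<le> K"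
      proof
        fix a assume a: "a \<in> A"
        show "\<bar>SUP b\<in>B. g a b\<bar> \<le> K" by (rule sup_bound[OF False]) (use bg a in auto)
      qed
      show "0 \<le> d" by (rule d)
    qed
  qed
  show "\<bar>(SUP b\<in>B. INF a\<in>A. f a b) - (SUP b\<in>B. INF a\<in>A. g a b)\<bar> \<le> d"
  proof (cases "A = {}")
    case True then show ?thesis using d by simp
  next
    case False
    show ?thesis
    proof (rule sup_close[where K=K])
      show "\<forall>b\<in>B. \<bar>(INF a\<in>A. f a b) - (INF a\<in>A. g a b)\<bar> \<le> d"
      proof
        fix b assume b: "b \<in> B"
        show "\<bar>(INF a\<in>A. f a b) - (INF a\<in>A. g a b)\<bar> \<le> d"
          by (rule inf_close[where K=K]) (use cl bf bg d b in auto)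
      qed
      show "\<forall>b\<in>B. \<bar>INF a\<in>A. f a b\<bar> \<le> K"
      proof
        fix b assume b: "b \<in> B"
        show "\<bar>INF a\<in>A. f a b\<bar> \<le> K" by (rule inf_bound[OF False]) (use bf b in auto)
      qed
      show "\<forall>b\<in>B. \<bar>INF a\<in>A. g a b\<bar> \<le> K"
      proof
        fix b assume b: "b \<in> B"
        show "\<bar>INF a\<in>A. g a b\<bar> \<le> K" by (rule inf_bound[OF False]) (use bg b in auto)
      qed
      show "0 \<le> d" by (rule d)
    qed
  qed
qed

lemma act_meas:
  assumes g: "\<forall>j<N. \<gamma> j \<in> measurable (sb (Y j) \<Otimes>\<^sub>M rand_space N) (sb (U j))"
    and fy: "fy \<in> measurable X (PiM {..<N} (\<lambda>j. sb (Y j)))"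
    and fz: "fz \<in> measurable X (rand_space N)"
  shows "(\<lambda>x. act N \<gamma> (fy x) (fz x)) \<in> measurable X (PiM {..<N} (\<lambda>j. sb (U j)))"
  unfolding act_def
proof (rule measurable_restrict)
  fix i assume i: "i \<in> {..<N}"
  have p: "(\<lambda>x. (fy x i, fz x)) \<in> measurable X (sb (Y i) \<Otimes>\<^sub>M rand_space N)"
    by (rule measurable_Pair[OF measurable_compose[OF fy measurable_component_singleton[OF i]] fz])
  have gi: "\<gamma> i \<in> measurable (sb (Y i) \<Otimes>\<^sub>M rand_space N) (sb (U i))" using g i by simp
  show "(\<lambda>x. \<gamma> i (fy x i, fz x)) \<in> measurable X (sb (U i))"
    by (rule measurable_compose[OF p gi])
qed

lemma key:
  fixes N1 N2 :: nat
    and \<Omega>0 :: "'o::polish_space set"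
    and Y1 :: "nat \<Rightarrow> 'y1::polish_space set" and Y2 :: "nat \<Rightarrow> 'y2::polish_space set"
    and U1 :: "nat \<Rightarrow> 'u1::polish_space set" and U2 :: "nat \<Rightarrow> 'u2::polish_space set"
    and c :: "'o \<Rightarrow> (nat \<Rightarrow> 'u1) \<Rightarrow> (nat \<Rightarrow> 'u2) \<Rightarrow> real"
  defines "Mb \<equiv> sb \<Omega>0 \<Otimes>\<^sub>M (PiM {..<N1} (\<lambda>j. sb (Y1 j)) \<Otimes>\<^sub>M PiM {..<N2} (\<lambda>j. sb (Y2 j)))"
  assumes c_meas: "(\<lambda>(\<omega>, u1, u2). c \<omega> u1 u2) \<in> borel_measurable
        (sb \<Omega>0 \<Otimes>\<^sub>M (PiM {..<N1} (\<lambda>j. sb (U1 j)) \<Otimes>\<^sub>M PiM {..<N2} (\<lambda>j. sb (U2 j))))"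
    and cb: "\<forall>\<omega>\<in>\<Omega>0. \<forall>u1\<in>PiE {..<N1} U1. \<forall>u2\<in>PiE {..<N2} U2. \<bar>c \<omega> u1 u2\<bar> \<le> B"
    and p1: "p1 \<in> team_policies N1 Y1 U1" and p2: "p2 \<in> team_policies N2 Y2 U2"
  shows "\<exists>H. H \<in> borel_measurable Mb \<and> (\<forall>x\<in>space Mb. \<bar>H x\<bar> \<le> B) \<and>
     (\<forall>P. prob_space P \<longrightarrow> sets P = sets Mb \<longrightarrow> exp_cost N1 N2 c P p1 p2 = (\<integral>x. H x \<partial>P))"
proof -
  obtain \<eta>1 \<gamma>1 where p1eq: "p1 = (\<eta>1, \<gamma>1)" by (cases p1)
  obtain \<eta>2 \<gamma>2 where p2eq: "p2 = (\<eta>2, \<gamma>2)" by (cases p2)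
  have e1: "prob_space \<eta>1" and s1: "sets \<eta>1 = sets (rand_space N1)"
    and g1: "\<forall>j<N1. \<gamma>1 j \<in> measurable (sb (Y1 j) \<Otimes>\<^sub>M rand_space N1) (sb (U1 j))"
    using p1 by (auto simp: p1eq team_policies_def)
  have e2: "prob_space \<eta>2" and s2: "sets \<eta>2 = sets (rand_space N2)"
    and g2: "\<forall>j<N2. \<gamma>2 j \<in> measurable (sb (Y2 j) \<Otimes>\<^sub>M rand_space N2) (sb (U2 j))"
    using p2 by (auto simp: p2eq team_policies_def)
  define X where "X = (Mb \<Otimes>\<^sub>M \<eta>1) \<Otimes>\<^sub>M \<eta>2"
  define \<Phi> where "\<Phi> = (\<lambda>x::(('o \<times> (nat \<Rightarrow> 'y1) \<times> (nat \<Rightarrow> 'y2)) \<times> (nat \<Rightarrow> real)) \<times> (nat \<Rightarrow> real).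
     (fst (fst (fst x)), act N1 \<gamma>1 (fst (snd (fst (fst x)))) (snd (fst x)),
        act N2 \<gamma>2 (snd (snd (fst (fst x)))) (snd x)))"
  define F where "F = (\<lambda>x. (\<lambda>(\<omega>, u1, u2). c \<omega> u1 u2) (\<Phi> x))"
  have m0: "(\<lambda>x. fst (fst (fst x))) \<in> measurable X (sb \<Omega>0)"
    unfolding X_def Mb_def by (rule measurable_fst''[OF measurable_fst''[OF measurable_fst]])
  have my1: "(\<lambda>x. fst (snd (fst (fst x)))) \<in> measurable X (PiM {..<N1} (\<lambda>j. sb (Y1 j)))"
    unfolding X_def Mb_def by (rule measurable_fst''[OF measurable_fst''[OF measurable_snd''[OF measurable_fst]]])
  have my2: "(\<lambda>x. snd (snd (fst (fst x)))) \<in> measurable X (PiM {..<N2} (\<lambda>j. sb (Y2 j)))"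
    unfolding X_def Mb_def by (rule measurable_fst''[OF measurable_fst''[OF measurable_snd''[OF measurable_snd]]])
  have mz1: "(\<lambda>x. snd (fst x)) \<in> measurable X (rand_space N1)"
  proof -
    have "(\<lambda>x. snd (fst x)) \<in> measurable X \<eta>1" unfolding X_def by (rule measurable_fst''[OF measurable_snd])
    then show ?thesis using measurable_cong_sets[OF refl s1, of X] by blast
  qed
  have mz2: "(\<lambda>x. snd x) \<in> measurable X (rand_space N2)"
  proof -
    have "(\<lambda>x. snd x) \<in> measurable X \<eta>2" unfolding X_def by (rule measurable_snd)
    then show ?thesis using measurable_cong_sets[OF refl s2, of X] by blast
  qed
  have \<Phi>m: "\<Phi> \<in> measurable X (sb \<Omega>0 \<Otimes>\<^sub>M (PiM {..<N1} (\<lambda>j. sb (U1 j)) \<Otimes>\<^sub>M PiM {..<N2} (\<lambda>j. sb (U2 j))))"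
    unfolding \<Phi>_def
    by (intro measurable_Pair m0 act_meas[OF g1 my1 mz1] act_meas[OF g2 my2 mz2])
  have Fm: "F \<in> borel_measurable X"
    unfolding F_def by (rule measurable_compose[OF \<Phi>m c_meas])
  have Fb: "\<forall>w\<in>space X. \<bar>F w\<bar> \<le> B"
  proof
    fix w assume "w \<in> space X"
    from measurable_space[OF \<Phi>m this]
    have "\<Phi> w \<in> \<Omega>0 \<times> (PiE {..<N1} U1 \<times> PiE {..<N2} U2)"
      by (simp add: space_pair_measure space_PiM sb_def space_restrict_space)
    moreover obtain a b d where abd: "\<Phi> w = (a, b, d)" by (metis prod.collapse)
    ultimately have "a \<in> \<Omega>0" "b \<in> PiE {..<N1} U1" "d \<in> PiE {..<N2} U2" by auto
    then show "\<bar>F w\<bar> \<le> B" using cb unfolding F_def abd by simp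
  qed
  define G where "G w = (\<integral>z. F (w, z) \<partial>\<eta>2)" for w
  note outer = fubA[OF e2 Fm[unfolded X_def] Fb[unfolded X_def], folded G_def]
  define H where "H x = (\<integral>z. G (x, z) \<partial>\<eta>1)" for x
  note inner = fubA[OF e1 outer(1) outer(2), folded H_def]
  have intg: "(\<lambda>x. case x of (((\<omega>, y1, y2), z1), z2) \<Rightarrow>
              c \<omega> (act N1 (snd p1) y1 z1) (act N2 (snd p2) y2 z2)) = F"
  proof (rule ext)
    fix x :: "(('o \<times> (nat \<Rightarrow> 'y1) \<times> (nat \<Rightarrow> 'y2)) \<times> (nat \<Rightarrow> real)) \<times> (nat \<Rightarrow> real)"
    obtain \<omega> y1 y2 z1 z2 where "x = (((\<omega>, y1, y2), z1), z2)" by (metis prod.collapse)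
    then show "(case x of (((\<omega>, y1, y2), z1), z2) \<Rightarrow>
              c \<omega> (act N1 (snd p1) y1 z1) (act N2 (snd p2) y2 z2)) = F x"
      by (simp add: F_def \<Phi>_def p1eq p2eq)
  qed
  show ?thesis
  proof (intro exI conjI allI impI)
    show "H \<in> borel_measurable Mb" by (rule inner(1))
    show "\<forall>x\<in>space Mb. \<bar>H x\<bar> \<le> B" by (rule inner(2))
    fix P assume P: "prob_space P" and sP: "sets P = sets Mb"
    have "exp_cost N1 N2 c P p1 p2 = (\<integral>w. F w \<partial>((P \<Otimes>\<^sub>M \<eta>1) \<Otimes>\<^sub>M \<eta>2))"
      unfolding exp_cost_def intg by (simp add: p1eq p2eq)
    also have "\<dots> = (\<integral>w. G w \<partial>(P \<Otimes>\<^sub>M \<eta>1))"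
      by (rule outer(3)[OF prob_space_pair[OF P e1] sets_pair_measure_cong[OF sP refl]])
    also have "\<dots> = (\<integral>x. H x \<partial>P)"
      by (rule inner(3)[OF P sP])
    finally show "exp_cost N1 N2 c P p1 p2 = (\<integral>x. H x \<partial>P)" .
  qed
qed

theorem theorem9:
  fixes N1 N2 :: nat
    and \<Omega>0 :: "'o::polish_space set"
    and Y1 :: "nat \<Rightarrow> 'y1::polish_space set" and Y2 :: "nat \<Rightarrow> 'y2::polish_space set"
    and U1 :: "nat \<Rightarrow> 'u1::polish_space set" and U2 :: "nat \<Rightarrow> 'u2::polish_space set"
    and c :: "'o \<Rightarrow> (nat \<Rightarrow> 'u1) \<Rightarrow> (nat \<Rightarrow> 'u2) \<Rightarrow> real"
    and \<mu>s :: "nat \<Rightarrow> ('o \<times> (nat \<Rightarrow> 'y1) \<times> (nat \<Rightarrow> 'y2)) measure"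
    and \<mu> :: "('o \<times> (nat \<Rightarrow> 'y1) \<times> (nat \<Rightarrow> 'y2)) measure"
  assumes \<Omega>0: "\<Omega>0 \<in> sets borel"
    and Y1: "\<forall>j<N1. Y1 j \<in> sets borel" and Y2: "\<forall>j<N2. Y2 j \<in> sets borel"
    and U1: "\<forall>j<N1. compact (U1 j) \<and> U1 j \<noteq> {}"
    and U2: "\<forall>j<N2. compact (U2 j) \<and> U2 j \<noteq> {}"
    and c_meas: "(\<lambda>(\<omega>, u1, u2). c \<omega> u1 u2) \<in> borel_measurable
        (sb \<Omega>0 \<Otimes>\<^sub>M (PiM {..<N1} (\<lambda>j. sb (U1 j)) \<Otimes>\<^sub>M PiM {..<N2} (\<lambda>j. sb (U2 j))))"
    and c_bdd: "\<exists>B. \<forall>\<omega>\<in>\<Omega>0. \<forall>u1\<in>PiE {..<N1} U1. \<forall>u2\<in>PiE {..<N2} U2. \<bar>c \<omega> u1 u2\<bar> \<le> B"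
    and c_cont: "\<forall>\<omega>\<in>\<Omega>0. continuous_on (PiE {..<N1} U1 \<times> PiE {..<N2} U2) (\<lambda>(u1, u2). c \<omega> u1 u2)"
    and cls_n: "\<forall>n. info_class N1 N2 \<Omega>0 Y1 Y2 (\<mu>s n)"
    and cls: "info_class N1 N2 \<Omega>0 Y1 Y2 \<mu>"
    and tv: "(\<lambda>n. tv_dist (sb \<Omega>0 \<Otimes>\<^sub>M (PiM {..<N1} (\<lambda>j. sb (Y1 j)) \<Otimes>\<^sub>M PiM {..<N2} (\<lambda>j. sb (Y2 j))))
                (\<mu>s n) \<mu>) \<longlonglongrightarrow> 0"
  shows "(\<lambda>n. upper_value N1 N2 Y1 Y2 U1 U2 c (\<mu>s n)) \<longlonglongrightarrow> upper_value N1 N2 Y1 Y2 U1 U2 c \<mu>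
       \<and> (\<lambda>n. lower_value N1 N2 Y1 Y2 U1 U2 c (\<mu>s n)) \<longlonglongrightarrow> lower_value N1 N2 Y1 Y2 U1 U2 c \<mu>"
proof -
  define Mb where "Mb = sb \<Omega>0 \<Otimes>\<^sub>M (PiM {..<N1} (\<lambda>j. sb (Y1 j)) \<Otimes>\<^sub>M PiM {..<N2} (\<lambda>j. sb (Y2 j)))"
  define TP1 where "TP1 = team_policies N1 Y1 U1"
  define TP2 where "TP2 = team_policies N2 Y2 U2"
  define tvn where "tvn = (\<lambda>n. tv_dist Mb (\<mu>s n) \<mu>)"
  obtain B where B: "\<forall>\<omega>\<in>\<Omega>0. \<forall>u1\<in>PiE {..<N1} U1. \<forall>u2\<in>PiE {..<N2} U2. \<bar>c \<omega> u1 u2\<bar> \<le> B"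
    using c_bdd by blast
  define K where "K = \<bar>B\<bar> + 1"
  have K: "K > 0" unfolding K_def by simp
  have cK: "\<forall>\<omega>\<in>\<Omega>0. \<forall>u1\<in>PiE {..<N1} U1. \<forall>u2\<in>PiE {..<N2} U2. \<bar>c \<omega> u1 u2\<bar> \<le> K"
    using B unfolding K_def by force
  have pm: "prob_space \<mu>" "sets \<mu> = sets Mb" using cls unfolding info_class_def Mb_def by auto
  have pmn: "prob_space (\<mu>s n)" "sets (\<mu>s n) = sets Mb" for n
    using cls_n unfolding info_class_def Mb_def by auto
  have H: "\<exists>H. H \<in> borel_measurable Mb \<and> (\<forall>x\<in>space Mb. \<bar>H x\<bar> \<le> K) \<and>
     (\<forall>P. prob_space P \<longrightarrow> sets P = sets Mb \<longrightarrow> exp_cost N1 N2 c P p1 p2 = (\<integral>x. H x \<partial>P))"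
    if "p1 \<in> TP1" "p2 \<in> TP2" for p1 p2
    unfolding Mb_def by (rule key[OF c_meas cK that[unfolded TP1_def TP2_def]])
  have tv0: "0 \<le> tvn n" for n unfolding tvn_def by (rule tv_facts(1)[OF pmn(1) pm(1) pmn(2) pm(2)])
  have close: "\<bar>exp_cost N1 N2 c (\<mu>s n) p1 p2 - exp_cost N1 N2 c \<mu> p1 p2\<bar> \<le> K * tvn n"
    and bdn: "\<bar>exp_cost N1 N2 c (\<mu>s n) p1 p2\<bar> \<le> K"
    and bd: "\<bar>exp_cost N1 N2 c \<mu> p1 p2\<bar> \<le> K"
    if pp: "p1 \<in> TP1" "p2 \<in> TP2" for p1 p2 n
  proof -
    obtain h where hm: "h \<in> borel_measurable Mb" and hb: "\<forall>x\<in>space Mb. \<bar>h x\<bar> \<le> K"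
      and he: "\<And>P. prob_space P \<Longrightarrow> sets P = sets Mb \<Longrightarrow> exp_cost N1 N2 c P p1 p2 = (\<integral>x. h x \<partial>P)"
      using H[OF pp] by blast
    show "\<bar>exp_cost N1 N2 c (\<mu>s n) p1 p2 - exp_cost N1 N2 c \<mu> p1 p2\<bar> \<le> K * tvn n"
      unfolding he[OF pmn] he[OF pm] tvn_def by (rule tv_facts(2)[OF pmn(1) pm(1) pmn(2) pm(2) hm hb K])
    show "\<bar>exp_cost N1 N2 c (\<mu>s n) p1 p2\<bar> \<le> K"
      unfolding he[OF pmn]
      by (rule abs_int_le[OF pmn(1)])
        (use hm hb sets_eq_imp_space_eq[OF pmn(2)] in \<open>auto simp: measurable_cong_sets[OF pmn(2) refl]\<close>)
    show "\<bar>exp_cost N1 N2 c \<mu> p1 p2\<bar> \<le> K"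
      unfolding he[OF pm]
      by (rule abs_int_le[OF pm(1)])
        (use hm hb sets_eq_imp_space_eq[OF pm(2)] in \<open>auto simp: measurable_cong_sets[OF pm(2) refl]\<close>)
  qed
  note mm = minimax_close[where A=TP1 and B=TP2 and K=K and d="K * tvn n"
      and f="\<lambda>p1 p2. exp_cost N1 N2 c (\<mu>s n) p1 p2" and g="\<lambda>p1 p2. exp_cost N1 N2 c \<mu> p1 p2" for n]
  have hyp: "\<forall>a\<in>TP1. \<forall>b\<in>TP2. \<bar>exp_cost N1 N2 c (\<mu>s n) a b - exp_cost N1 N2 c \<mu> a b\<bar> \<le> K * tvn n"
    "\<forall>a\<in>TP1. \<forall>b\<in>TP2. \<bar>exp_cost N1 N2 c (\<mu>s n) a b\<bar> \<le> K"
    "\<forall>a\<in>TP1. \<forall>b\<in>TP2. \<bar>exp_cost N1 N2 c \<mu> a b\<bar> \<le> K"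
    "0 \<le> K * tvn n" for n
    using close bdn bd tv0 K by auto
  have up: "\<bar>upper_value N1 N2 Y1 Y2 U1 U2 c (\<mu>s n) - upper_value N1 N2 Y1 Y2 U1 U2 c \<mu>\<bar> \<le> K * tvn n"
    and lo: "\<bar>lower_value N1 N2 Y1 Y2 U1 U2 c (\<mu>s n) - lower_value N1 N2 Y1 Y2 U1 U2 c \<mu>\<bar> \<le> K * tvn n" for n
    unfolding upper_value_def lower_value_def TP1_def[symmetric] TP2_def[symmetric]
    using mm(1)[OF hyp] mm(2)[OF hyp] by auto
  have t0: "(\<lambda>n. K * tvn n) \<longlonglongrightarrow> 0"
    using tendsto_mult[OF tendsto_const[of K] tv[folded Mb_def, folded tvn_def[unfolded Mb_def[symmetric]]]] by simp
  have "(\<lambda>n. upper_value N1 N2 Y1 Y2 U1 U2 c (\<mu>s n) - upper_value N1 N2 Y1 Y2 U1 U2 c \<mu>) \<longlonglongrightarrow> 0"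
    by (rule Lim_null_comparison[OF _ t0]) (use up in auto)
  moreover have "(\<lambda>n. lower_value N1 N2 Y1 Y2 U1 U2 c (\<mu>s n) - lower_value N1 N2 Y1 Y2 U1 U2 c \<mu>) \<longlonglongrightarrow> 0"
    by (rule Lim_null_comparison[OF _ t0]) (use lo in auto)
  ultimately show ?thesis by (auto intro: LIM_zero_cancel)
qed

end
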